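(* Let $(X,d)$ be a compact metric space with a nonatomic Borel probability measure $\mu$, and let $T$ be an invertible ergodic measure-preserving transformation of $(X,\mu)$. If $T$ is uniformly rigid along a strictly increasing sequence $\{n_k\}$ of natural numbers, then $\{n_k\}$ has density zero, i.e. $\lim_{N\to\infty}\frac{1}{N}\#\{k: n_k\le N\}=0$.
   Context: $T$ is uniformly rigid along $\{n_k\}$ if $\sup_{x\in X} d(T^{n_k}x,x)\to 0$ as $k\to\infty$. *)

theory Defs
  imports "HOL-Probability.Probability"
begin

definition nonatomic :: "'a measure \<Rightarrow> bool" where
  "nonatomic M \<longleftrightarrow>
     \<not> (\<exists>A\<in>sets M. measure M A > 0 \<and>
          (\<forall>B\<in>sets M. B \<subseteq> A \<longrightarrow> measure M B = 0 \<or> measure M B = measure M A))"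

definition measure_preserving :: "'a measure \<Rightarrow> ('a \<Rightarrow> 'a) \<Rightarrow> bool" where
  "measure_preserving M T \<longleftrightarrow> T \<in> measurable M M \<and> distr M M T = M"

definition ergodic :: "'a measure \<Rightarrow> ('a \<Rightarrow> 'a) \<Rightarrow> bool" where
  "ergodic M T \<longleftrightarrow>
     (\<forall>A\<in>sets M. T -` A \<inter> space M = A \<longrightarrow> measure M A = 0 \<or> measure M A = 1)"

definition uniformly_rigid :: "'a::metric_space set \<Rightarrow> ('a \<Rightarrow> 'a) \<Rightarrow> (nat \<Rightarrow> nat) \<Rightarrow> bool" where
  "uniformly_rigid X T n \<longleftrightarrow>
     ((\<lambda>k. SUP x\<in>X. dist ((T ^^ n k) x) x) \<longlonglongrightarrow> 0)"

end

theory Submission imports Defs begin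

definition good_fam :: "nat set \<Rightarrow> int set \<Rightarrow> bool" where
  "good_fam S F \<longleftrightarrow> finite F \<and> (\<forall>f\<in>F. \<forall>g\<in>F. f \<noteq> g \<longrightarrow> (\<lambda>s. f + int s) ` S \<inter> (\<lambda>s. g + int s) ` S = {})"

lemma good_fam_bound:
  fixes S :: "nat set" and \<delta> :: real
  assumes "\<delta> > 0" and dens: "\<forall>M. \<exists>N\<ge>M. real (card (S \<inter> {..N})) \<ge> \<delta> * real N"
    and g: "good_fam S F"
  shows "real (card F) \<le> 2/\<delta>"
proof -
  have finF: "finite F" using g by (simp add: good_fam_def)
  obtain R :: nat where R: "\<forall>f\<in>F. \<bar>f\<bar> \<le> int R"
  proof
    show "\<forall>f\<in>F. \<bar>f\<bar> \<le> int (nat (Max (insert 0 (abs ` F))))"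
      using finF by (auto intro: Max_ge)
  qed
  obtain N where N: "N \<ge> 2*R+1" and cN: "real (card (S \<inter> {..N})) \<ge> \<delta> * real N"
    using dens by blast
  define A where "A f = (\<lambda>s. f + int s) ` (S \<inter> {..N})" for f
  have cardA: "card (A f) = card (S \<inter> {..N})" for f
    unfolding A_def by (rule card_image) (auto simp: inj_on_def)
  have disj: "\<forall>f\<in>F. \<forall>g\<in>F. f \<noteq> g \<longrightarrow> A f \<inter> A g = {}"
    using g unfolding good_fam_def A_def by blast
  have "card (\<Union>f\<in>F. A f) = (\<Sum>f\<in>F. card (A f))"
    by (rule card_UN_disjoint) (use finF disj in \<open>auto simp: A_def\<close>)
  also have "\<dots> = card F * card (S \<inter> {..N})" by (simp add: cardA)
  finally have eq: "card (\<Union>f\<in>F. A f) = card F * card (S \<inter> {..N})" .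
  have sub: "(\<Union>f\<in>F. A f) \<subseteq> {-int R..int R + int N}"
    using R unfolding A_def by force
  have "card (\<Union>f\<in>F. A f) \<le> card {-int R..int R + int N}"
    by (rule card_mono[OF _ sub]) simp
  also have "\<dots> = 2*R + N + 1" by simp
  finally have "card F * card (S \<inter> {..N}) \<le> 2*R + N + 1" using eq by simp
  then have "card F * card (S \<inter> {..N}) \<le> 2 * N" using N by linarith
  then have "real (card F) * real (card (S \<inter> {..N})) \<le> 2 * real N"
    by (metis of_nat_le_iff of_nat_mult of_nat_numeral)
  moreover have "real (card F) * (\<delta> * real N) \<le> real (card F) * real (card (S \<inter> {..N}))"
    using cN by (simp add: mult_left_mono)
  ultimately have "real (card F) * \<delta> * real N \<le> 2 * real N" by (simp add: mult.assoc)
  moreover have "real N > 0" using N by simp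
  ultimately have "real (card F) * \<delta> \<le> 2" by simp
  then show ?thesis using assms(1) by (simp add: field_simps)
qed

lemma comb_cover:
  fixes S :: "nat set" and \<delta> :: real
  assumes d: "\<delta> > 0" and dens: "\<forall>M. \<exists>N\<ge>M. real (card (S \<inter> {..N})) \<ge> \<delta> * real N"
    and ne: "S \<noteq> {}"
  shows "\<exists>G::nat set. finite G \<and> real (card G) \<le> 2/\<delta> \<and>
           (\<forall>m::int. \<exists>g\<in>G. \<exists>s1\<in>S. \<exists>s2\<in>S. m + int s1 = int g + int s2)"
proof -
  define P where "P k = (\<exists>F. good_fam S F \<and> card F = k)" for k
  have P1: "P 1" unfolding P_def good_fam_def by (rule exI[of _ "{0}"]) simp
  have bnd: "\<forall>y. P y \<longrightarrow> y \<le> nat \<lfloor>2/\<delta>\<rfloor>"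
  proof (intro allI impI)
    fix y assume "P y"
    then obtain F where "good_fam S F" "card F = y" unfolding P_def by blast
    then have "real y \<le> 2/\<delta>" using good_fam_bound[OF d dens] by blast
    then show "y \<le> nat \<lfloor>2/\<delta>\<rfloor>" by linarith
  qed
  obtain k where Pk: "P k" and kmax: "\<forall>y. P y \<longrightarrow> y \<le> k"
    using Nat.ex_has_greatest_nat[OF P1 bnd] by blast
  obtain F0 where g0: "good_fam S F0" and c0: "card F0 = k" using Pk unfolding P_def by blast
  have fin0: "finite F0" using g0 by (simp add: good_fam_def)
  have "k \<ge> 1" using kmax P1 by blast
  then have F0ne: "F0 \<noteq> {}" using c0 by auto
  have claim: "\<exists>f\<in>F0. \<exists>s1\<in>S. \<exists>s2\<in>S. m + int s1 = f + int s2" for m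
  proof (cases "m \<in> F0")
    case True
    then show ?thesis using ne by blast
  next
    case False
    show ?thesis
    proof (rule ccontr)
      assume nc: "\<not> ?thesis"
      have "good_fam S (insert m F0)"
        using g0 nc unfolding good_fam_def by (auto simp: fin0) (metis IntI empty_iff)+
      moreover have "card (insert m F0) = k + 1" using False fin0 c0 by simp
      ultimately have "P (k+1)" unfolding P_def by blast
      then show False using kmax by fastforce
    qed
  qed
  define a where "a = Min F0"
  have amin: "f \<in> F0 \<Longrightarrow> a \<le> f" for f unfolding a_def using fin0 by simp
  define G where "G = (\<lambda>f. nat (f - a)) ` F0"
  have "finite G" unfolding G_def using fin0 by simp
  moreover have "real (card G) \<le> 2/\<delta>"
  proof -
    have "card G \<le> card F0" unfolding G_def using fin0 by (rule card_image_le)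
    moreover have "real (card F0) \<le> 2/\<delta>" using good_fam_bound[OF d dens g0] .
    ultimately show ?thesis by linarith
  qed
  moreover have "\<forall>m::int. \<exists>g\<in>G. \<exists>s1\<in>S. \<exists>s2\<in>S. m + int s1 = int g + int s2"
  proof
    fix m :: int
    obtain f s1 s2 where f: "f \<in> F0" "s1 \<in> S" "s2 \<in> S" "m + a + int s1 = f + int s2"
      using claim[of "m + a"] by blast
    have "int (nat (f - a)) = f - a" using amin[OF f(1)] by simp
    then have "m + int s1 = int (nat (f - a)) + int s2" using f(4) by simp
    moreover have "nat (f - a) \<in> G" unfolding G_def using f(1) by blast
    ultimately show "\<exists>g\<in>G. \<exists>s1\<in>S. \<exists>s2\<in>S. m + int s1 = int g + int s2" using f by blast
  qed
  ultimately show ?thesis by blast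
qed

lemma funpow_maps:
  assumes "\<forall>x\<in>X. T x \<in> X" "x \<in> X" shows "(T ^^ m) x \<in> X"
  using assms by (induction m) auto

lemma funpow_inv_cancel:
  assumes "\<forall>x\<in>X. S x \<in> X" "\<forall>x\<in>X. T (S x) = x" "y \<in> X"
  shows "(T ^^ p) ((S ^^ p) y) = y"
  using assms(3)
proof (induction p arbitrary: y)
  case 0 then show ?case by simp
next
  case (Suc p)
  have "(T ^^ Suc p) ((S ^^ Suc p) y) = (T ^^ p) (T (S ((S ^^ p) y)))"
    by (simp only: funpow_Suc_right[of p T] funpow.simps(2)[of p S] comp_apply)
  also have "\<dots> = (T ^^ p) ((S ^^ p) y)" using assms(2) funpow_maps[OF assms(1) Suc.prems] by simp
  also have "\<dots> = y" using Suc by simp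
  finally show ?case .
qed

lemma funpow_measurable:
  assumes "T \<in> measurable M M" shows "(T ^^ m) \<in> measurable M M"
proof (induction m)
  case 0 then show ?case by simp
next
  case (Suc m)
  have "T ^^ Suc m = T \<circ> T ^^ m" by simp
  then show ?case using measurable_comp[OF Suc assms] by (simp add: comp_def)
qed

lemma funpow_preserving:
  assumes "measure_preserving M T" "A \<in> sets M"
  shows "measure M ((T ^^ m) -` A \<inter> space M) = measure M A"
  using assms(2)
proof (induction m arbitrary: A)
  case 0
  then show ?case using sets.sets_into_space by (simp add: Int_absorb2)
next
  case (Suc m)
  have Tm: "T \<in> measurable M M" "distr M M T = M" using assms(1) by (auto simp: measure_preserving_def)
  have C: "(T ^^ m) -` A \<inter> space M \<in> sets M" using measurable_sets[OF funpow_measurable[OF Tm(1)] Suc.prems] .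
  have "(T ^^ Suc m) -` A \<inter> space M = T -` ((T ^^ m) -` A \<inter> space M) \<inter> space M"
    unfolding funpow_Suc_right[of m T] using measurable_space[OF Tm(1)] by auto
  also have "measure M \<dots> = measure (distr M M T) ((T ^^ m) -` A \<inter> space M)"
    by (rule measure_distr[OF Tm(1) C, symmetric])
  also have "\<dots> = measure M A" using Tm(2) Suc by simp
  finally show ?case .
qed

theorem proposition4p1:
  fixes X :: "'a::metric_space set" and M :: "'a measure"
    and T :: "'a \<Rightarrow> 'a" and n :: "nat \<Rightarrow> nat"
  assumes "compact X"
    and "space M = X" and "sets M = sets (restrict_space borel X)"
    and "prob_space M"
    and "nonatomic M"
    and "bij_betw T X X"
    and "measure_preserving M T"
    and "measure_preserving M (inv_into X T)"
    and "ergodic M T"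
    and "strict_mono n"
    and "uniformly_rigid X T n"
  shows "(\<lambda>N. real (card {k. n k \<le> N}) / real N) \<longlonglongrightarrow> 0"
proof (rule ccontr)
  assume nt: "\<not> ?thesis"
  note cpt = assms(1) and spX = assms(2) and setsM = assms(3) and P = assms(4)
  define Ti where "Ti = inv_into X T"
  define c where "c N = card {k. n k \<le> N}" for N
  obtain \<delta> :: real where d0: "\<delta> > 0" and dens: "\<forall>Mn. \<exists>N\<ge>Mn. real (c N) \<ge> \<delta> * real N"
  proof -
    from nt obtain r :: real where r: "r > 0" "\<forall>no. \<exists>N\<ge>no. \<not> dist (real (c N) / real N) 0 < r"
      unfolding LIMSEQ_def c_def by blast
    have "\<forall>Mn. \<exists>N\<ge>Mn. real (c N) \<ge> r * real N"
    proof
      fix Mn :: nat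
      obtain N where N: "N \<ge> Suc Mn" "\<not> dist (real (c N) / real N) 0 < r" using r(2) by blast
      then have "real N > 0" by simp
      moreover have "real (c N) / real N \<ge> r" using N(2) by simp
      ultimately have "real (c N) \<ge> r * real N" by (simp add: field_simps)
      then show "\<exists>N\<ge>Mn. real (c N) \<ge> r * real N" using N(1) by (intro exI[of _ N]) simp
    qed
    then show thesis using that r(1) by blast
  qed
  have bij: "bij_betw T X X" by fact
  have TX: "\<forall>x\<in>X. T x \<in> X" using bij by (auto simp: bij_betw_def)
  have TiX: "\<forall>x\<in>X. Ti x \<in> X" unfolding Ti_def using bij
    by (metis bij_betw_def bij_betw_inv_into_left inv_into_into)
  have TiT: "\<forall>x\<in>X. Ti (T x) = x" unfolding Ti_def using bij by (simp add: bij_betw_inv_into_left)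
  have TTi: "\<forall>x\<in>X. T (Ti x) = x" unfolding Ti_def using bij by (simp add: bij_betw_inv_into_right)
  have Tmeas: "T \<in> measurable M M" using assms(7) by (simp add: measure_preserving_def)
  have Timeas: "Ti \<in> measurable M M" using assms(8) by (simp add: measure_preserving_def Ti_def)
  interpret prob_space M by fact
  have borel_sets: "A \<in> sets borel \<Longrightarrow> A \<inter> X \<in> sets M" for A
    using setsM by (auto simp: sets_restrict_space)
  have ball_sets: "ball x e \<inter> X \<in> sets M" for x e by (rule borel_sets) simp
  have X1: "measure M X = 1" using prob_space spX by simp
  have pt0: "measure M {x} = 0" if "x \<in> X" for x
  proof (rule ccontr)
    assume "measure M {x} \<noteq> 0"
    then have pos: "measure M {x} > 0" using measure_nonneg[of M "{x}"] by linarith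
    have sx: "{x} \<in> sets M" using borel_sets[of "{x}"] that by simp
    have "\<forall>B\<in>sets M. B \<subseteq> {x} \<longrightarrow> measure M B = 0 \<or> measure M B = measure M {x}"
      by (metis measure_empty subset_singletonD)
    then show False using assms(5) pos sx unfolding nonatomic_def by blast
  qed
  obtain x0 where x0X: "x0 \<in> X" and supp: "\<And>e. e > 0 \<Longrightarrow> measure M (ball x0 e \<inter> X) > 0"
  proof -
    have "\<exists>x0\<in>X. \<forall>e>0. measure M (ball x0 e \<inter> X) > 0"
    proof (rule ccontr)
      assume "\<not> ?thesis"
      then have "\<forall>x\<in>X. \<exists>e>0. measure M (ball x e \<inter> X) = 0"
        using measure_nonneg by (metis linorder_not_le order_antisym_conv)
      then obtain e where e: "\<forall>x\<in>X. e x > 0 \<and> measure M (ball x (e x) \<inter> X) = 0" by metis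
      have "X \<subseteq> (\<Union>x\<in>X. ball x (e x))" using e by auto
      then obtain D where D: "D \<subseteq> X" "finite D" "X \<subseteq> (\<Union>x\<in>D. ball x (e x))"
        using compactE_image[OF cpt, of X "\<lambda>x. ball x (e x)"] by auto
      have "X = (\<Union>x\<in>D. ball x (e x) \<inter> X)" using D by auto
      then have "measure M X \<le> (\<Sum>x\<in>D. measure M (ball x (e x) \<inter> X))"
        using measure_UNION_le[OF D(2), of "\<lambda>x. ball x (e x) \<inter> X" M] ball_sets by simp
      also have "\<dots> = 0" using e D(1) by (auto intro!: sum.neutral)
      finally show False using X1 by simp
    qed
    then show thesis using that by blast
  qed
  obtain r where r0: "r > 0" and rsmall: "measure M (ball x0 r \<inter> X) < \<delta> / 4"
  proof -
    define A where "A k = ball x0 (1 / real (Suc k)) \<inter> X" for k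
    have "range A \<subseteq> sets M" unfolding A_def using ball_sets by auto
    moreover have "decseq A" unfolding A_def decseq_def
    proof (intro allI impI)
      fix i j :: nat assume "i \<le> j"
      then have "1 / real (Suc j) \<le> 1 / real (Suc i)" by (simp add: frac_le)
      then show "ball x0 (1 / real (Suc j)) \<inter> X \<subseteq> ball x0 (1 / real (Suc i)) \<inter> X" by auto
    qed
    ultimately have lim: "(\<lambda>k. measure M (A k)) \<longlonglongrightarrow> measure M (\<Inter>k. A k)"
      by (rule finite_Lim_measure_decseq)
    have "(\<Inter>k. A k) = {x0}"
    proof
      show "{x0} \<subseteq> (\<Inter>k. A k)" using x0X unfolding A_def by auto
      show "(\<Inter>k. A k) \<subseteq> {x0}"
      proof
        fix y assume y: "y \<in> (\<Inter>k. A k)"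
        have "dist x0 y = 0"
        proof (rule ccontr)
          assume "dist x0 y \<noteq> 0"
          then have "dist x0 y > 0" by simp
          then obtain k where k: "1 / real (Suc k) < dist x0 y" using nat_approx_posE by blast
          have "y \<in> A k" using y by blast
          then have "dist x0 y < 1 / real (Suc k)" unfolding A_def by simp
          then show False using k by linarith
        qed
        then show "y \<in> {x0}" by simp
      qed
    qed
    then have "(\<lambda>k. measure M (A k)) \<longlonglongrightarrow> 0" using lim pt0[OF x0X] by simp
    then obtain k where "measure M (A k) < \<delta> / 4"
      using d0 by (metis (no_types, lifting) LIMSEQ_D diff_zero divide_pos_pos dual_order.refl
          real_norm_def abs_less_iff zero_less_numeral)
    then show thesis using that[of "1 / real (Suc k)"] unfolding A_def by simp
  qed
  define \<epsilon> where "\<epsilon> = r / 3"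
  have e0: "\<epsilon> > 0" using r0 by (simp add: \<epsilon>_def)
  obtain K where Kp: "\<And>k x. k \<ge> K \<Longrightarrow> x \<in> X \<Longrightarrow> dist ((T ^^ n k) x) x < \<epsilon>"
  proof -
    have "bounded X" using cpt by (rule compact_imp_bounded)
    then obtain b where b: "\<forall>x\<in>X. \<forall>y\<in>X. dist x y \<le> b" by (auto simp: bounded_two_points)
    have lim: "(\<lambda>k. SUP x\<in>X. dist ((T ^^ n k) x) x) \<longlonglongrightarrow> 0"
      using assms(11) by (simp add: uniformly_rigid_def)
    obtain K where K: "\<forall>k\<ge>K. norm ((SUP x\<in>X. dist ((T ^^ n k) x) x) - 0) < \<epsilon>"
      using LIMSEQ_D[OF lim e0] by blast
    have "dist ((T ^^ n k) x) x < \<epsilon>" if "k \<ge> K" "x \<in> X" for k x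
    proof -
      have bdd: "bdd_above ((\<lambda>x. dist ((T ^^ n k) x) x) ` X)"
        using b funpow_maps[OF TX] by (auto intro!: bdd_aboveI2)
      have "dist ((T ^^ n k) x) x \<le> (SUP x\<in>X. dist ((T ^^ n k) x) x)"
        by (rule cSUP_upper[OF that(2) bdd])
      also have "\<dots> < \<epsilon>"
      proof -
        have "\<bar>SUP x\<in>X. dist ((T ^^ n k) x) x\<bar> < \<epsilon>" using K that(1) by simp
        then show ?thesis by linarith
      qed
      finally show ?thesis .
    qed
    then show thesis using that by blast
  qed
  define S where "S = n ` {K..}"
  have cS: "real (c N) \<le> real K + real (card (S \<inter> {..N}))" for N
  proof -
    have "{k. n k \<le> N} \<subseteq> {..<K} \<union> {k. K \<le> k \<and> n k \<le> N}" by auto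
    moreover have fin: "finite {k. K \<le> k \<and> n k \<le> N}"
      by (rule finite_subset[of _ "{..N}"]) (use strict_mono_imp_increasing[OF assms(10)] in \<open>auto intro: le_trans\<close>)
    ultimately have "c N \<le> card {..<K} + card {k. K \<le> k \<and> n k \<le> N}"
      unfolding c_def by (metis (no_types, lifting) card_Un_le card_mono finite_Un finite_lessThan le_trans)
    moreover have "card {k. K \<le> k \<and> n k \<le> N} = card (n ` {k. K \<le> k \<and> n k \<le> N})"
      using strict_mono_imp_inj_on[OF assms(10)] by (simp add: card_image inj_on_subset)
    moreover have "card (n ` {k. K \<le> k \<and> n k \<le> N}) \<le> card (S \<inter> {..N})"
      by (rule card_mono) (auto simp: S_def)
    ultimately show ?thesis by simp
  qed
  have densS: "\<forall>Mn. \<exists>N\<ge>Mn. real (card (S \<inter> {..N})) \<ge> (\<delta>/2) * real N"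
  proof
    fix Mn
    obtain N where N: "N \<ge> max Mn (nat \<lceil>2 * real K / \<delta>\<rceil>)" "real (c N) \<ge> \<delta> * real N"
      using dens by blast
    have "real N \<ge> 2 * real K / \<delta>" using N(1) by linarith
    then have "\<delta> * real N \<ge> 2 * real K" using d0 by (simp add: field_simps)
    then have "real (card (S \<inter> {..N})) \<ge> (\<delta>/2) * real N" using N(2) cS[of N] by linarith
    then show "\<exists>N\<ge>Mn. real (card (S \<inter> {..N})) \<ge> (\<delta>/2) * real N" using N(1) by auto
  qed
  obtain G where Gfin: "finite G" and Gcard: "real (card G) \<le> 2 / (\<delta>/2)"
    and Gcov: "\<forall>m::int. \<exists>g\<in>G. \<exists>s1\<in>S. \<exists>s2\<in>S. m + int s1 = int g + int s2"
    using comb_cover[of "\<delta>/2" S] d0 densS by (auto simp: S_def)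
  define B where "B = ball x0 \<epsilon> \<inter> X"
  define W where "W = {y\<in>X. \<exists>m. (T ^^ m) y \<in> B \<or> (Ti ^^ m) y \<in> B}"
  have Wsets: "W \<in> sets M"
  proof -
    have "W = (\<Union>m. (T ^^ m) -` B \<inter> space M) \<union> (\<Union>m. (Ti ^^ m) -` B \<inter> space M)"
      unfolding W_def spX by auto
    moreover have "(T ^^ m) -` B \<inter> space M \<in> sets M" for m
      using measurable_sets[OF funpow_measurable[OF Tmeas] ball_sets[of x0 \<epsilon>]] unfolding B_def .
    moreover have "(Ti ^^ m) -` B \<inter> space M \<in> sets M" for m
      using measurable_sets[OF funpow_measurable[OF Timeas] ball_sets[of x0 \<epsilon>]] unfolding B_def .
    ultimately show ?thesis by (auto simp del: UN_simps intro!: sets.Un sets.countable_UN)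
  qed
  have Winv: "T -` W \<inter> space M = W"
  proof (rule set_eqI)
    fix y
    show "y \<in> T -` W \<inter> space M \<longleftrightarrow> y \<in> W"
    proof (cases "y \<in> X")
      case False then show ?thesis using spX by (auto simp: W_def)
    next
      case yX: True
      show ?thesis
      proof
        assume "y \<in> T -` W \<inter> space M"
        then obtain m where m: "(T ^^ m) (T y) \<in> B \<or> (Ti ^^ m) (T y) \<in> B" by (auto simp: W_def)
        then show "y \<in> W"
        proof
          assume "(T ^^ m) (T y) \<in> B"
          then have "(T ^^ Suc m) y \<in> B" by (simp add: funpow_swap1)
          then show ?thesis using yX unfolding W_def by blast
        next
          assume h: "(Ti ^^ m) (T y) \<in> B"
          show ?thesis
          proof (cases m)
            case 0
            then have "(T ^^ 1) y \<in> B" using h by simp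
            then show ?thesis using yX unfolding W_def by blast
          next
            case (Suc m')
            then have "(Ti ^^ m') y \<in> B" using h TiT yX by (simp add: funpow_swap1)
            then show ?thesis using yX unfolding W_def by blast
          qed
        qed
      next
        assume "y \<in> W"
        then obtain m where m: "(T ^^ m) y \<in> B \<or> (Ti ^^ m) y \<in> B" by (auto simp: W_def)
        have TyX: "T y \<in> X" using TX yX by blast
        from m have "T y \<in> W"
        proof
          assume h: "(T ^^ m) y \<in> B"
          show ?thesis
          proof (cases m)
            case 0
            then have "(Ti ^^ 1) (T y) \<in> B" using h TiT yX by simp
            then show ?thesis using TyX unfolding W_def by blast
          next
            case (Suc m')
            then have "(T ^^ m') (T y) \<in> B" using h by (simp add: funpow_swap1)
            then show ?thesis using TyX unfolding W_def by blast
          qed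
        next
          assume h: "(Ti ^^ m) y \<in> B"
          then have "(Ti ^^ Suc m) (T y) \<in> B" using TiT yX by (simp add: funpow_swap1)
          then show ?thesis using TyX unfolding W_def by blast
        qed
        then show "y \<in> T -` W \<inter> space M" using yX spX by simp
      qed
    qed
  qed
  have "B \<subseteq> W" unfolding W_def B_def by (auto intro: exI[of _ 0])
  then have "measure M W \<ge> measure M B" using Wsets by (intro finite_measure_mono) auto
  moreover have "measure M B > 0" unfolding B_def using supp e0 by blast
  ultimately have "measure M W \<noteq> 0" by linarith
  then have W1: "measure M W = 1" using assms(9) Wsets Winv unfolding ergodic_def spX by blast
  define B2 where "B2 = ball x0 r \<inter> X"
  have cover: "W \<subseteq> (\<Union>g\<in>G. (T ^^ g) -` B2 \<inter> space M)"
  proof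
    fix y assume yW: "y \<in> W"
    then have yX: "y \<in> X" by (simp add: W_def)
    have key: "\<exists>g\<in>G. (T ^^ g) y \<in> B2"
      if z: "z \<in> B" and rel: "\<And>s1 s2 g. int s1 = int g + int s2 + mm \<Longrightarrow> (T ^^ s1) z = (T ^^ s2) ((T ^^ g) y)"
      for z and mm :: int
    proof -
      obtain g s1 s2 where g: "g \<in> G" "s1 \<in> S" "s2 \<in> S" "- mm + int s1 = int g + int s2"
        using Gcov by blast
      have zX: "z \<in> X" and zx: "dist x0 z < \<epsilon>" using z by (auto simp: B_def)
      have wX: "(T ^^ g) y \<in> X" using funpow_maps[OF TX yX] .
      obtain k1 k2 where k: "k1 \<ge> K" "s1 = n k1" "k2 \<ge> K" "s2 = n k2" using g(2,3) by (auto simp: S_def)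
      have d1: "dist ((T ^^ s1) z) z < \<epsilon>" using Kp[OF k(1) zX] k(2) by simp
      have d2: "dist ((T ^^ s2) ((T ^^ g) y)) ((T ^^ g) y) < \<epsilon>" using Kp[OF k(3) wX] k(4) by simp
      have eq: "(T ^^ s1) z = (T ^^ s2) ((T ^^ g) y)" using rel g(4) by simp
      have "dist x0 ((T ^^ g) y) \<le> dist x0 z + dist z ((T ^^ s1) z) + dist ((T ^^ s1) z) ((T ^^ g) y)"
        using dist_triangle[of x0 "(T ^^ g) y" z] dist_triangle[of z "(T ^^ g) y" "(T ^^ s1) z"] by linarith
      also have "\<dots> < 3 * \<epsilon>" using zx d1 d2 eq by (simp add: dist_commute)
      finally have "(T ^^ g) y \<in> B2" using wX by (simp add: B2_def \<epsilon>_def)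
      then show ?thesis using g(1) by blast
    qed
    from yW obtain p where "(T ^^ p) y \<in> B \<or> (Ti ^^ p) y \<in> B" by (auto simp: W_def)
    then have "\<exists>g\<in>G. (T ^^ g) y \<in> B2"
    proof
      assume h: "(T ^^ p) y \<in> B"
      show ?thesis
      proof (rule key[OF h, of "- int p"])
        fix s1 s2 g assume "int s1 = int g + int s2 + - int p"
        then have "s1 + p = s2 + g" by simp
        then have "(T ^^ (s1 + p)) y = (T ^^ (s2 + g)) y" by simp
        then show "(T ^^ s1) ((T ^^ p) y) = (T ^^ s2) ((T ^^ g) y)" by (simp add: funpow_add)
      qed
    next
      assume h: "(Ti ^^ p) y \<in> B"
      show ?thesis
      proof (rule key[OF h, of "int p"])
        fix s1 s2 g assume "int s1 = int g + int s2 + int p"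
        then have s: "s1 = (s2 + g) + p" by simp
        have c: "(T ^^ p) ((Ti ^^ p) y) = y" by (rule funpow_inv_cancel[OF TiX TTi yX])
        have "(T ^^ s1) ((Ti ^^ p) y) = (T ^^ (s2 + g)) ((T ^^ p) ((Ti ^^ p) y))"
          unfolding s funpow_add by simp
        also have "\<dots> = (T ^^ s2) ((T ^^ g) y)" unfolding c funpow_add by simp
        finally show "(T ^^ s1) ((Ti ^^ p) y) = (T ^^ s2) ((T ^^ g) y)" .
      qed
    qed
    then show "y \<in> (\<Union>g\<in>G. (T ^^ g) -` B2 \<inter> space M)" using yX spX by auto
  qed
  have Bs: "B2 \<in> sets M" using ball_sets B2_def by simp
  have pres: "\<And>g. (T ^^ g) -` B2 \<inter> space M \<in> sets M"
    using measurable_sets[OF funpow_measurable[OF Tmeas] Bs] by blast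
  have "1 \<le> measure M (\<Union>g\<in>G. (T ^^ g) -` B2 \<inter> space M)"
    unfolding W1[symmetric] by (rule finite_measure_mono[OF cover]) (use pres in \<open>auto simp del: UN_simps intro!: sets.countable_UN\<close>)
  also have "\<dots> \<le> (\<Sum>g\<in>G. measure M ((T ^^ g) -` B2 \<inter> space M))"
    by (rule measure_UNION_le[OF Gfin pres])
  also have "\<dots> = real (card G) * measure M B2"
    using funpow_preserving[OF assms(7) Bs] by simp
  also have "\<dots> \<le> (4 / \<delta>) * measure M B2"
    using Gcard by (intro mult_right_mono) (auto simp: field_simps)
  also have "\<dots> < (4 / \<delta>) * (\<delta> / 4)" using rsmall d0 by (simp add: B2_def)
  also have "\<dots> = 1" using d0 by simp
  finally show False by simp
qed

end
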